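(* Consider the two-sided market model described in the context with $\phi(x)=x^\theta$ for some $0<\theta<1$, and suppose $a>\zeta$, where $$\zeta=\max\Big\{\tfrac{1}{2}\big(\tfrac{\gamma-2}{\gamma-1}\phi'(\bar Yx_0)+\lambda\big)\bar X,\ \tfrac{1}{2}\big(\textstyle\int_{x_0}^{\infty}\phi'(x\bar Y)x^{1-\gamma}dx+\lambda \bar X\big)\Big\}.$$ Let $y^*>y_0$ be the revenue-maximizing CP threshold, i.e. the solution of $g(y^* )=a$, and let $\widehat y>y_0$ be the welfare-maximizing CP threshold, i.e. the solution of $h(\widehat y)=a$. Then $\widehat y<y^*$.
   Context: Model: fix $\gamma>2$, $\beta>2$, $\lambda>0$, $a\ge0$. Consumer types have density $x^{-\gamma}$ on $x\ge x_0:=(\frac{1}{\gamma-1})^{\frac{1}{\gamma-1}}$, CP types density $y^{-\beta}$ on $y\ge y_0:=(\frac{1}{\beta-1})^{\frac{1}{\beta-1}}$. Let $Y(s)=\int_s^\infty y^{1-\beta}dy$, $\bar X=\int_{x_0}^\infty x^{1-\gamma}dx$, $\bar Y=Y(y_0)$. Define for $y\ge y_0$: $g(y)=\frac12\big(\frac{\gamma-2}{\gamma-1}\phi'(x_0\sqrt{\bar Y Y(y)})+\lambda\big)\frac{\bar X\sqrt{\bar Y}}{\sqrt{Y(y)}}$ and $h(y)=\frac12\big(\int_{x_0}^\infty\phi'(x\sqrt{\bar Y Y(y)})x^{1-\gamma}dx+\lambda\bar X\big)\frac{\sqrt{\bar Y}}{\sqrt{Y(y)}}$. Interpretation: with all consumers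 participating and CPs of type $\ge y$ participating, $g(y)=a$ is the first-order condition for the ISP's revenue $\phi(x_0\sqrt{\bar YY(y)})+\lambda\bar X\sqrt{\bar Y Y(y)}-aY(y)$ (membership fee and CP fee set so threshold types are indifferent), and $h(y)=a$ is the first-order condition for the social welfare $\int_{x_0}^\infty\phi(x\sqrt{\bar YY(y)})x^{-\gamma}dx+\lambda\bar X\sqrt{\bar YY(y)}-aY(y)$. Both $g$ and $h$ are increasing in $y$. *)

theory Defs
  imports "HOL-Analysis.Analysis"
begin

text \<open>Lower end of the consumer type support.\<close>
definition x0 :: "real \<Rightarrow> real" where
  "x0 \<gamma> = (1 / (\<gamma> - 1)) powr (1 / (\<gamma> - 1))"

text \<open>Lower end of the CP type support.\<close>
definition y0 :: "real \<Rightarrow> real" where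
  "y0 \<beta> = (1 / (\<beta> - 1)) powr (1 / (\<beta> - 1))"

definition Ycp :: "real \<Rightarrow> real \<Rightarrow> real" where
  "Ycp \<beta> s = integral {s..} (\<lambda>y. y powr (1 - \<beta>))"

definition Xbar :: "real \<Rightarrow> real" where
  "Xbar \<gamma> = integral {x0 \<gamma>..} (\<lambda>x. x powr (1 - \<gamma>))"

definition Ybar :: "real \<Rightarrow> real" where
  "Ybar \<beta> = Ycp \<beta> (y0 \<beta>)"

text \<open>First-order condition function for ISP revenue; dphi is the derivative of phi.\<close>
definition gfun :: "(real \<Rightarrow> real) \<Rightarrow> real \<Rightarrow> real \<Rightarrow> real \<Rightarrow> real \<Rightarrow> real" where
  "gfun dphi \<gamma> \<beta> lam y =
     1/2 * ((\<gamma> - 2) / (\<gamma> - 1) * dphi (x0 \<gamma> * sqrt (Ybar \<beta> * Ycp \<beta> y)) + lam)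
         * Xbar \<gamma> * sqrt (Ybar \<beta>) / sqrt (Ycp \<beta> y)"

text \<open>First-order condition function for social welfare.\<close>
definition hfun :: "(real \<Rightarrow> real) \<Rightarrow> real \<Rightarrow> real \<Rightarrow> real \<Rightarrow> real \<Rightarrow> real" where
  "hfun dphi \<gamma> \<beta> lam y =
     1/2 * (integral {x0 \<gamma>..} (\<lambda>x. dphi (x * sqrt (Ybar \<beta> * Ycp \<beta> y)) * x powr (1 - \<gamma>))
            + lam * Xbar \<gamma>)
         * sqrt (Ybar \<beta>) / sqrt (Ycp \<beta> y)"

definition zeta :: "(real \<Rightarrow> real) \<Rightarrow> real \<Rightarrow> real \<Rightarrow> real \<Rightarrow> real" where
  "zeta dphi \<gamma> \<beta> lam =
     max (1/2 * ((\<gamma> - 2) / (\<gamma> - 1) * dphi (Ybar \<beta> * x0 \<gamma>) + lam) * Xbar \<gamma>)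
         (1/2 * (integral {x0 \<gamma>..} (\<lambda>x. dphi (x * Ybar \<beta>) * x powr (1 - \<gamma>)) + lam * Xbar \<gamma>))"

end

theory Submission
  imports Defs
begin

lemma Ycp_eq:
  assumes "s > 0" "\<beta> > 2"
  shows "Ycp \<beta> s = s powr (2-\<beta>)/(\<beta>-2)"
proof -
  have "1 - \<beta> < -1" using assms by simp
  from has_integral_powr_to_inf[OF this assms(1)]
  have "Ycp \<beta> s = - (s powr (1-\<beta>+1)) / (1-\<beta>+1)"
    unfolding Ycp_def by (rule integral_unique)
  also have "\<dots> = s powr (2-\<beta>)/(\<beta>-2)" using assms
    by (simp add: field_simps)
  finally show ?thesis .
qed

lemma Xbar_eq:
  assumes "x0 \<gamma> > 0" "\<gamma> > 2"
  shows "Xbar \<gamma> = x0 \<gamma> powr (2-\<gamma>)/(\<gamma>-2)"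
proof -
  have "1 - \<gamma> < -1" using assms by simp
  from has_integral_powr_to_inf[OF this assms(1)]
  have "Xbar \<gamma> = - (x0 \<gamma> powr (1-\<gamma>+1)) / (1-\<gamma>+1)"
    unfolding Xbar_def by (rule integral_unique)
  also have "\<dots> = x0 \<gamma> powr (2-\<gamma>)/(\<gamma>-2)" using assms
    by (simp add: field_simps)
  finally show ?thesis .
qed

lemma deriv_pw:
  fixes z \<theta> :: real
  assumes "z > 0"
  shows "deriv (\<lambda>x. x powr \<theta>) z = \<theta> * z powr (\<theta> - 1)"
  using has_real_derivative_powr[OF assms] by (rule DERIV_imp_deriv)

lemma hint:
  assumes "x0 \<gamma> > 0" "S > 0" "\<theta> < 1" "\<gamma> > 2"
  shows "integral {x0 \<gamma>..} (\<lambda>x. deriv (\<lambda>x. x powr \<theta>) (x * S) * x powr (1 - \<gamma>))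
     = \<theta> * S powr (\<theta>-1) * (x0 \<gamma> powr (\<theta>+1-\<gamma>) / (\<gamma>-1-\<theta>))"
proof -
  have "\<theta> - \<gamma> < -1" using assms by simp
  from has_integral_powr_to_inf[OF this assms(1)]
  have h0: "((\<lambda>x. x powr (\<theta>-\<gamma>)) has_integral - (x0 \<gamma> powr (\<theta>-\<gamma>+1)) / (\<theta>-\<gamma>+1)) {x0 \<gamma>..}" .
  have "- (x0 \<gamma> powr (\<theta>-\<gamma>+1)) / (\<theta>-\<gamma>+1) = x0 \<gamma> powr (\<theta>+1-\<gamma>) / (\<gamma>-1-\<theta>)"
    using assms by (simp add: field_simps add.commute add.left_commute)
  with h0 have h: "((\<lambda>x. x powr (\<theta>-\<gamma>)) has_integral x0 \<gamma> powr (\<theta>+1-\<gamma>) / (\<gamma>-1-\<theta>)) {x0 \<gamma>..}"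
    by simp
  have h2: "((\<lambda>x. \<theta> * S powr (\<theta>-1) * x powr (\<theta>-\<gamma>)) has_integral
      \<theta> * S powr (\<theta>-1) * (x0 \<gamma> powr (\<theta>+1-\<gamma>) / (\<gamma>-1-\<theta>))) {x0 \<gamma>..}"
    using has_integral_mult_right[OF h] by simp
  have eq: "deriv (\<lambda>x. x powr \<theta>) (x * S) * x powr (1 - \<gamma>) = \<theta> * S powr (\<theta>-1) * x powr (\<theta>-\<gamma>)"
    if "x \<in> {x0 \<gamma>..}" for x
  proof -
    have xp: "x > 0" using that assms by auto
    have "deriv (\<lambda>x. x powr \<theta>) (x * S) * x powr (1 - \<gamma>) = \<theta> * (x powr (\<theta>-1) * S powr (\<theta>-1)) * x powr (1 - \<gamma>)"
      using xp assms by (simp add: deriv_pw powr_mult)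
    also have "\<dots> = \<theta> * S powr (\<theta>-1) * (x powr (\<theta>-1) * x powr (1 - \<gamma>))" by simp
    also have "x powr (\<theta>-1) * x powr (1 - \<gamma>) = x powr (\<theta>-\<gamma>)"
      by (simp add: powr_add[symmetric])
    finally show ?thesis .
  qed
  show ?thesis
    by (rule integral_unique, rule has_integral_eq[OF _ h2]) (use eq in simp)
qed


lemma x0_pos: "\<gamma> > 2 \<Longrightarrow> x0 \<gamma> > 0"
  unfolding x0_def by simp

lemma y0_pos: "\<beta> > 2 \<Longrightarrow> y0 \<beta> > 0"
  unfolding y0_def by simp

lemma Ycp_pos: "s > 0 \<Longrightarrow> \<beta> > 2 \<Longrightarrow> Ycp \<beta> s > 0"
  by (simp add: Ycp_eq)

lemma Ycp_anti: "0 < s \<Longrightarrow> s \<le> t \<Longrightarrow> \<beta> > 2 \<Longrightarrow> Ycp \<beta> t \<le> Ycp \<beta> s"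
  by (simp add: Ycp_eq divide_right_mono powr_mono2')

lemma g_mono:
  fixes \<theta> :: real
  assumes "\<gamma> > 2" "\<beta> > 2" "lam > 0" "0 < \<theta>" "\<theta> < 1" "y0 \<beta> < y1" "y1 \<le> y2"
  shows "gfun (deriv (\<lambda>x. x powr \<theta>)) \<gamma> \<beta> lam y1 \<le> gfun (deriv (\<lambda>x. x powr \<theta>)) \<gamma> \<beta> lam y2"
proof -
  have x0p: "x0 \<gamma> > 0" using assms x0_pos by auto
  have y0p: "y0 \<beta> > 0" using assms y0_pos by auto
  define Yb where "Yb = Ybar \<beta>"
  have Ybp: "Yb > 0" unfolding Yb_def Ybar_def using Ycp_pos y0p assms by auto
  define Y1 where "Y1 = Ycp \<beta> y1"
  define Y2 where "Y2 = Ycp \<beta> y2"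
  have Y1p: "Y1 > 0" unfolding Y1_def using Ycp_pos assms y0p by auto
  have Y2p: "Y2 > 0" unfolding Y2_def using Ycp_pos assms y0p by auto
  have Y21: "Y2 \<le> Y1" unfolding Y1_def Y2_def using Ycp_anti assms y0p by auto
  have Xp: "Xbar \<gamma> > 0" using Xbar_eq[OF x0p] assms x0p by simp
  have U21: "x0 \<gamma> * sqrt (Yb * Y2) \<le> x0 \<gamma> * sqrt (Yb * Y1)"
    using Y21 Ybp x0p by (simp add: mult_left_mono)
  have U2p: "x0 \<gamma> * sqrt (Yb * Y2) > 0" using x0p Ybp Y2p by simp
  have A: "(x0 \<gamma> * sqrt (Yb * Y1)) powr (\<theta>-1) \<le> (x0 \<gamma> * sqrt (Yb * Y2)) powr (\<theta>-1)"
    using powr_mono2'[OF _ U2p U21] assms by simp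
  have A': "(\<gamma>-2)/(\<gamma>-1) * (\<theta> * (x0 \<gamma> * sqrt (Yb * Y1)) powr (\<theta>-1)) + lam
      \<le> (\<gamma>-2)/(\<gamma>-1) * (\<theta> * (x0 \<gamma> * sqrt (Yb * Y2)) powr (\<theta>-1)) + lam"
  proof -
    have "\<theta> * (x0 \<gamma> * sqrt (Yb * Y1)) powr (\<theta>-1) \<le> \<theta> * (x0 \<gamma> * sqrt (Yb * Y2)) powr (\<theta>-1)"
      using A assms by (intro mult_left_mono) auto
    moreover have "(\<gamma>-2)/(\<gamma>-1) \<ge> 0" using assms by simp
    ultimately show ?thesis by (rule_tac add_right_mono, rule_tac mult_left_mono)
  qed
  have A1p: "0 \<le> (\<gamma>-2)/(\<gamma>-1) * (\<theta> * (x0 \<gamma> * sqrt (Yb * Y1)) powr (\<theta>-1)) + lam"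
    using assms by simp
  have B: "sqrt Yb / sqrt Y1 \<le> sqrt Yb / sqrt Y2"
    using Y21 Y2p Ybp by (simp add: divide_left_mono)
  have "1/2 * ((\<gamma>-2)/(\<gamma>-1) * (\<theta> * (x0 \<gamma> * sqrt (Yb * Y1)) powr (\<theta>-1)) + lam) * Xbar \<gamma> * (sqrt Yb / sqrt Y1)
     \<le> 1/2 * ((\<gamma>-2)/(\<gamma>-1) * (\<theta> * (x0 \<gamma> * sqrt (Yb * Y2)) powr (\<theta>-1)) + lam) * Xbar \<gamma> * (sqrt Yb / sqrt Y2)"
    apply (rule mult_mono[OF _ B])
    using A' A1p Xp Ybp Y1p by (auto intro!: mult_right_mono)
  moreover have "x0 \<gamma> * sqrt (Yb * Y1) > 0" using x0p Ybp Y1p by simp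
  ultimately show ?thesis using U2p
    unfolding gfun_def Yb_def[symmetric] Y1_def[symmetric] Y2_def[symmetric]
    by (simp add: deriv_pw)
qed

lemma g_lt_h:
  fixes \<theta> :: real
  assumes "\<gamma> > 2" "\<beta> > 2" "lam > 0" "0 < \<theta>" "\<theta> < 1" "y0 \<beta> < y"
  shows "gfun (deriv (\<lambda>x. x powr \<theta>)) \<gamma> \<beta> lam y < hfun (deriv (\<lambda>x. x powr \<theta>)) \<gamma> \<beta> lam y"
proof -
  have x0p: "x0 \<gamma> > 0" using assms x0_pos by auto
  have y0p: "y0 \<beta> > 0" using assms y0_pos by auto
  define Yb where "Yb = Ybar \<beta>"
  have Ybp: "Yb > 0" unfolding Yb_def Ybar_def using Ycp_pos y0p assms by auto
  define Y where "Y = Ycp \<beta> y"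
  have Yp: "Y > 0" unfolding Y_def using Ycp_pos assms y0p by auto
  define U where "U = sqrt (Yb * Y)"
  have Up: "U > 0" unfolding U_def using Ybp Yp by simp
  define x where "x = x0 \<gamma>"
  have xp: "x > 0" using x0p x_def by simp
  have XE: "Xbar \<gamma> = x powr (2-\<gamma>)/(\<gamma>-2)" using Xbar_eq[OF x0p] assms x_def by simp
  have Bp: "sqrt Yb / sqrt Y > 0" using Ybp Yp by simp
  have key: "(\<gamma>-2)/(\<gamma>-1) * x powr (\<theta>-1) * Xbar \<gamma> < x powr (\<theta>+1-\<gamma>) / (\<gamma>-1-\<theta>)"
  proof -
    have "(\<gamma>-2)/(\<gamma>-1) * x powr (\<theta>-1) * Xbar \<gamma> = (x powr (\<theta>-1) * x powr (2-\<gamma>)) / (\<gamma>-1)"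
    proof -
      have gen: "(\<gamma>-2)/(\<gamma>-1) * A * (B/(\<gamma>-2)) = (A*B)/(\<gamma>-1)" for A B
        using assms by (simp add: divide_simps)
      show ?thesis unfolding XE by (rule gen)
    qed
    also have "x powr (\<theta>-1) * x powr (2-\<gamma>) = x powr (\<theta>+1-\<gamma>)"
    proof -
      have e: "\<theta>+1-\<gamma> = (\<theta>-1) + (2-\<gamma>)" by simp
      show ?thesis unfolding e by (rule powr_add[symmetric])
    qed
    also have "x powr (\<theta>+1-\<gamma>) / (\<gamma>-1) < x powr (\<theta>+1-\<gamma>) / (\<gamma>-1-\<theta>)"
      using assms xp by (intro divide_strict_left_mono) auto
    finally show ?thesis .
  qed
  have "1/2 * ((\<gamma>-2)/(\<gamma>-1) * (\<theta> * (x * U) powr (\<theta>-1)) + lam) * Xbar \<gamma> * (sqrt Yb / sqrt Y)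
      < 1/2 * (\<theta> * U powr (\<theta>-1) * (x powr (\<theta>+1-\<gamma>) / (\<gamma>-1-\<theta>)) + lam * Xbar \<gamma>) * (sqrt Yb / sqrt Y)"
  proof -
    have "(\<gamma>-2)/(\<gamma>-1) * (\<theta> * (x * U) powr (\<theta>-1)) * Xbar \<gamma>
        = (\<theta> * U powr (\<theta>-1)) * ((\<gamma>-2)/(\<gamma>-1) * x powr (\<theta>-1) * Xbar \<gamma>)"
      by (simp add: powr_mult)
    also have "\<dots> < (\<theta> * U powr (\<theta>-1)) * (x powr (\<theta>+1-\<gamma>) / (\<gamma>-1-\<theta>))"
      using key assms Up by (intro mult_strict_left_mono) auto
    finally have "(\<gamma>-2)/(\<gamma>-1) * (\<theta> * (x * U) powr (\<theta>-1)) * Xbar \<gamma>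
        < (\<theta> * U powr (\<theta>-1)) * (x powr (\<theta>+1-\<gamma>) / (\<gamma>-1-\<theta>))" .
    then have "((\<gamma>-2)/(\<gamma>-1) * (\<theta> * (x * U) powr (\<theta>-1)) + lam) * Xbar \<gamma>
       < \<theta> * U powr (\<theta>-1) * (x powr (\<theta>+1-\<gamma>) / (\<gamma>-1-\<theta>)) + lam * Xbar \<gamma>"
      by (simp add: distrib_right)
    then have "((\<gamma>-2)/(\<gamma>-1) * (\<theta> * (x * U) powr (\<theta>-1)) + lam) * Xbar \<gamma> * (sqrt Yb / sqrt Y)
       < (\<theta> * U powr (\<theta>-1) * (x powr (\<theta>+1-\<gamma>) / (\<gamma>-1-\<theta>)) + lam * Xbar \<gamma>) * (sqrt Yb / sqrt Y)"
      by (rule mult_strict_right_mono[OF _ Bp])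
    then have "1/2 * (((\<gamma>-2)/(\<gamma>-1) * (\<theta> * (x * U) powr (\<theta>-1)) + lam) * Xbar \<gamma> * (sqrt Yb / sqrt Y))
       < 1/2 * ((\<theta> * U powr (\<theta>-1) * (x powr (\<theta>+1-\<gamma>) / (\<gamma>-1-\<theta>)) + lam * Xbar \<gamma>) * (sqrt Yb / sqrt Y))"
      by (rule mult_strict_left_mono) simp_all
    then show ?thesis by (simp only: mult.assoc)
  qed
  moreover have "x * U > 0" using xp Up by simp
  ultimately show ?thesis using hint[OF x0p Up assms(5,1)]
    unfolding gfun_def hfun_def Yb_def[symmetric] Y_def[symmetric] U_def[symmetric] x_def[symmetric]
    by (simp add: deriv_pw)
qed

theorem theorem4:
  fixes \<gamma> \<beta> lam a \<theta> ystar yhat :: real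
  assumes "\<gamma> > 2" and "\<beta> > 2" and "lam > 0" and "a \<ge> 0"
    and "0 < \<theta>" and "\<theta> < 1"
    and "a > zeta (deriv (\<lambda>x. x powr \<theta>)) \<gamma> \<beta> lam"
    and "ystar > y0 \<beta>" and "gfun (deriv (\<lambda>x. x powr \<theta>)) \<gamma> \<beta> lam ystar = a"
    and "yhat > y0 \<beta>" and "hfun (deriv (\<lambda>x. x powr \<theta>)) \<gamma> \<beta> lam yhat = a"
  shows "yhat < ystar"
proof (rule ccontr)
  assume "\<not> yhat < ystar"
  then have "ystar \<le> yhat" by simp
  from g_mono[OF assms(1,2,3,5,6,8) this] g_lt_h[OF assms(1,2,3,5,6,10)] assms(9,11)
  show False by simp
qed

end
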